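(* For any positive integers $k$ and $M$ such that $k$ is a power of $2$, there exist a set $X$, $k$ families $F_1,\dots,F_k$ of functions with domain $X$ and codomain $\{0,1\}$, and a function $g:\{0,1\}^k\to\{0,1\}$ such that $\mathrm{opt}_{\mathrm{std}}(F_i)\le M$ for all $i\in\{1,\dots,k\}$ and \[\mathrm{opt}_{\mathrm{std}}(\mathrm{COMPOSE}(F_1,\dots,F_k,g))\ge\tfrac12 kM\log_2(k).\]
   Context: For a family $F$ of functions from a set $X$ to a set $Y$, $\mathrm{opt}_{\mathrm{std}}(F)$ is the worst-case number of mistakes in the standard online learning model under optimal play: an adversary secretly fixes $f\in F$ and presents inputs $x_1,x_2,\dots\in X$ adaptively; after each input the learner guesses $f(x_t)$ and the adversary then reveals $f(x_t)$; a mistake is an incorrect guess; the learner minimizes and the adversary maximizes the number of mistakes. $\mathrm{COMPOSE}(F_1,\dots,F_k,g)$ is the family of all functions $x\mapsto g(f_1(x),\dots,f_k(x))$ on $X$ with $f_i\in F_i$ for each $i$. *)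

theory Defs
  imports Complex_Main "HOL-Library.Extended_Real"
begin

text \<open>Standard online learning game on domain X for a family F of functions X -> Y.
  forces X F n: the adversary (who must keep the revealed labels consistent with some
  member of F, i.e. with the secretly fixed target) can force at least n mistakes
  against every learner. A round: adversary picks x in X, learner guesses yh,
  adversary reveals y (consistent with F); a mistake occurs iff y differs from yh.\<close>

inductive forces :: "'x set \<Rightarrow> ('x \<Rightarrow> 'y) set \<Rightarrow> nat \<Rightarrow> bool" where
  zero: "F \<noteq> {} \<Longrightarrow> forces X F 0"
| round: "x \<in> X \<Longrightarrow>
     (\<forall>yh. \<exists>y. (y \<noteq> yh \<and> forces X {f \<in> F. f x = y} n)
               \<or> (y = yh \<and> forces X {f \<in> F. f x = y} (Suc n)))
     \<Longrightarrow> forces X F (Suc n)"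

definition opt_std :: "'x set \<Rightarrow> ('x \<Rightarrow> 'y) set \<Rightarrow> enat" where
  "opt_std X F = Sup {enat n | n. forces X F n}"

definition COMPOSE :: "nat \<Rightarrow> (nat \<Rightarrow> ('x \<Rightarrow> 'y) set) \<Rightarrow> ('y list \<Rightarrow> 'z) \<Rightarrow> ('x \<Rightarrow> 'z) set" where
  "COMPOSE k F g = {(\<lambda>x. g (map (\<lambda>i. f i x) [0..<k])) | f. \<forall>i<k. f i \<in> F i}"

end

theory Submission
  imports Defs "HOL-Library.Countable"
begin

lemma forces_nonempty: "forces X F n \<Longrightarrow> F \<noteq> {}"
proof (induction rule: forces.induct)
  case (zero F X) then show ?case by simp
next
  case (round x X F n)
  from round.IH obtain y where
    "(forces X {f \<in> F. f x = y} n \<and> {f \<in> F. f x = y} \<noteq> {}) \<or>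
     (forces X {f \<in> F. f x = y} (Suc n) \<and> {f \<in> F. f x = y} \<noteq> {})" by blast
  then show ?case by blast
qed

lemma forces_mono: "forces X F n \<Longrightarrow> F \<subseteq> G \<Longrightarrow> forces X G n"
proof (induction arbitrary: G rule: forces.induct)
  case (zero F X) then show ?case by (auto intro: forces.zero)
next
  case (round x X F n)
  show ?case
  proof (rule forces.round[OF round.hyps(1)], intro allI)
    fix yh
    from round.IH obtain y where y:
      "(y \<noteq> yh \<and> (\<forall>G. {f \<in> F. f x = y} \<subseteq> G \<longrightarrow> forces X G n)) \<or>
       (y = yh \<and> (\<forall>G. {f \<in> F. f x = y} \<subseteq> G \<longrightarrow> forces X G (Suc n)))" by blast
    have sub: "{f \<in> F. f x = y} \<subseteq> {f \<in> G. f x = y}" using round.prems by blast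
    show "\<exists>y. y \<noteq> yh \<and> forces X {f \<in> G. f x = y} n \<or>
             y = yh \<and> forces X {f \<in> G. f x = y} (Suc n)"
      using y sub by blast
  qed
qed

lemma forces_down: "forces X F n \<Longrightarrow> m \<le> n \<Longrightarrow> forces X F m"
proof (induction arbitrary: m rule: forces.induct)
  case (zero F X) then show ?case by (auto intro: forces.zero)
next
  case (round x X F n)
  have ne: "F \<noteq> {}"
  proof -
    from round.IH obtain y where "forces X {f \<in> F. f x = y} n \<or> forces X {f \<in> F. f x = y} (Suc n)"
      by blast
    then have "{f \<in> F. f x = y} \<noteq> {}" using forces_nonempty by blast
    then show ?thesis by blast
  qed
  show ?case
  proof (cases m)
    case 0 then show ?thesis using ne by (simp add: forces.zero)
  next
    case (Suc m')
    have "m' \<le> n" using Suc round.prems by simp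
    show ?thesis unfolding Suc
    proof (rule forces.round[OF round.hyps(1)], intro allI)
      fix yh
      from round.IH obtain y where y:
        "(y \<noteq> yh \<and> (\<forall>m. m \<le> n \<longrightarrow> forces X {f \<in> F. f x = y} m)) \<or>
         (y = yh \<and> (\<forall>m. m \<le> Suc n \<longrightarrow> forces X {f \<in> F. f x = y} m))" by blast
      then show "\<exists>y. y \<noteq> yh \<and> forces X {f \<in> F. f x = y} m' \<or>
             y = yh \<and> forces X {f \<in> F. f x = y} (Suc m')"
        using \<open>m' \<le> n\<close> by auto
    qed
  qed
qed

lemma binsearch:
  assumes "finite A" "card A \<ge> 2 ^ d" "\<forall>i\<in>A. forces X (Hs i) m"
    "\<forall>S \<subseteq> A. \<exists>x\<in>X. \<forall>i\<in>A. \<forall>f\<in>Hs i. f x = (i \<in> S)"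
  shows "forces X (\<Union>i\<in>A. Hs i) (m + d)"
  using assms
proof (induction d arbitrary: A)
  case 0
  then obtain i where "i \<in> A" by fastforce
  then have "Hs i \<subseteq> (\<Union>i\<in>A. Hs i)" by blast
  moreover have "forces X (Hs i) m" using 0 \<open>i \<in> A\<close> by blast
  ultimately show ?case using forces_mono by simp
next
  case (Suc d)
  obtain S where S: "S \<subseteq> A" "card S = 2 ^ d"
    using obtain_subset_with_card_n[of "2^d" A] Suc.prems(2) by auto
  define T where "T = A - S"
  have fS: "finite S" "finite T" using S Suc.prems(1) finite_subset T_def by auto
  have cT: "card T \<ge> 2 ^ d" using S Suc.prems(1,2) unfolding T_def
    by (simp add: card_Diff_subset finite_subset)
  have IS: "forces X (\<Union>i\<in>S. Hs i) (m + d)"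
  proof (rule Suc.IH[OF fS(1)])
    show "2 ^ d \<le> card S" using S by simp
    show "\<forall>i\<in>S. forces X (Hs i) m" using Suc.prems(3) S(1) by blast
    show "\<forall>S'\<subseteq>S. \<exists>x\<in>X. \<forall>i\<in>S. \<forall>f\<in>Hs i. f x = (i \<in> S')"
    proof (intro allI impI)
      fix S' assume "S' \<subseteq> S"
      then have "S' \<subseteq> A" using S(1) by blast
      then obtain x where "x \<in> X" "\<forall>i\<in>A. \<forall>f\<in>Hs i. f x = (i \<in> S')" using Suc.prems(4) by blast
      then show "\<exists>x\<in>X. \<forall>i\<in>S. \<forall>f\<in>Hs i. f x = (i \<in> S')" using S(1) by blast
    qed
  qed
  have IT: "forces X (\<Union>i\<in>T. Hs i) (m + d)"
  proof (rule Suc.IH[OF fS(2) cT])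
    have TA: "T \<subseteq> A" unfolding T_def by blast
    show "\<forall>i\<in>T. forces X (Hs i) m" using Suc.prems(3) TA by blast
    show "\<forall>S'\<subseteq>T. \<exists>x\<in>X. \<forall>i\<in>T. \<forall>f\<in>Hs i. f x = (i \<in> S')"
    proof (intro allI impI)
      fix S' assume "S' \<subseteq> T"
      then have "S' \<subseteq> A" using TA by blast
      then obtain x where "x \<in> X" "\<forall>i\<in>A. \<forall>f\<in>Hs i. f x = (i \<in> S')" using Suc.prems(4) by blast
      then show "\<exists>x\<in>X. \<forall>i\<in>T. \<forall>f\<in>Hs i. f x = (i \<in> S')" using TA by blast
    qed
  qed
  obtain x where x: "x \<in> X" "\<forall>i\<in>A. \<forall>f\<in>Hs i. f x = (i \<in> S)" using Suc.prems(4) S by blast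
  have s1: "(\<Union>i\<in>S. Hs i) \<subseteq> {f \<in> (\<Union>i\<in>A. Hs i). f x = True}" using x S by auto
  have s2: "(\<Union>i\<in>T. Hs i) \<subseteq> {f \<in> (\<Union>i\<in>A. Hs i). f x = False}" using x unfolding T_def by auto
  show ?case unfolding add_Suc_right
  proof (rule forces.round[OF x(1)], intro allI)
    fix yh
    show "\<exists>y. y \<noteq> yh \<and> forces X {f \<in> (\<Union>i\<in>A. Hs i). f x = y} (m + d) \<or>
             y = yh \<and> forces X {f \<in> (\<Union>i\<in>A. Hs i). f x = y} (Suc (m + d))"
    proof (cases yh)
      case True then show ?thesis using forces_mono[OF IT s2] by (intro exI[of _ False]) simp
    next
      case False then show ?thesis using forces_mono[OF IS s1] by (intro exI[of _ True]) simp
    qed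
  qed
qed


definition dec :: "nat \<Rightarrow> nat list \<times> nat" where "dec x = from_nat x"

lemma dec_to_nat[simp]: "dec (to_nat (xs::nat list, c::nat)) = (xs, c)"
  unfolding dec_def by simp

definition fi :: "nat \<Rightarrow> nat set \<Rightarrow> nat \<Rightarrow> bool" where
  "fi i C x = (i \<in> set (fst (dec x)) \<and> snd (dec x) \<in> C)"

definition Fam :: "nat \<Rightarrow> nat \<Rightarrow> (nat \<Rightarrow> bool) set" where
  "Fam M i = {fi i C | C. finite C \<and> card C \<le> M}"

definition Bnd :: "nat \<Rightarrow> nat set \<Rightarrow> nat \<Rightarrow> (nat \<Rightarrow> bool) set" where
  "Bnd i K m = {fi i C | C. K \<subseteq> C \<and> finite C \<and> card (C - K) \<le> m}"

lemma ub: "forces X G n \<Longrightarrow> \<forall>K m. G \<subseteq> Bnd i K m \<longrightarrow> finite K \<longrightarrow> n \<le> m"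
proof (induction rule: forces.induct)
  case (zero F X) then show ?case by simp
next
  case (round x X G n)
  show ?case
  proof (intro allI impI)
    fix K m
    assume sub: "G \<subseteq> Bnd i K m" and fK: "finite K"
    define yh where "yh = (i \<in> set (fst (dec x)) \<and> snd (dec x) \<in> K)"
    define R where "R y = {f \<in> G. f x = y}" for y
    have ex: "\<exists>y. (y \<noteq> yh \<and> forces X (R y) n \<and> (\<forall>K m. R y \<subseteq> Bnd i K m \<longrightarrow> finite K \<longrightarrow> n \<le> m)) \<or>
       (y = yh \<and> forces X (R y) (Suc n) \<and> (\<forall>K m. R y \<subseteq> Bnd i K m \<longrightarrow> finite K \<longrightarrow> Suc n \<le> m))"
      unfolding R_def by (rule round.IH[THEN spec])
    then obtain y where y:
      "(y \<noteq> yh \<and> forces X (R y) n \<and> (\<forall>K m. R y \<subseteq> Bnd i K m \<longrightarrow> finite K \<longrightarrow> n \<le> m)) \<or>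
       (y = yh \<and> forces X (R y) (Suc n) \<and> (\<forall>K m. R y \<subseteq> Bnd i K m \<longrightarrow> finite K \<longrightarrow> Suc n \<le> m))"
      by (elim exE)
    have Rsub: "R y \<subseteq> G" unfolding R_def by blast
    show "Suc n \<le> m"
    proof (cases "y = yh")
      case True
      then have "\<forall>K m. R y \<subseteq> Bnd i K m \<longrightarrow> finite K \<longrightarrow> Suc n \<le> m" using y by simp
      then have "R y \<subseteq> Bnd i K m \<longrightarrow> finite K \<longrightarrow> Suc n \<le> m" by blast
      moreover have "R y \<subseteq> Bnd i K m" using Rsub sub by (rule subset_trans)
      ultimately show ?thesis using fK by blast
    next
      case yne: False
      then have fy: "forces X (R y) n" and IHy: "\<forall>K m. R y \<subseteq> Bnd i K m \<longrightarrow> finite K \<longrightarrow> n \<le> m"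
        using y by simp_all
      have ne: "R y \<noteq> {}" using fy forces_nonempty by blast
      show ?thesis
      proof (cases yh)
        case True
        have "R y = {}"
        proof -
          { fix f assume fG: "f \<in> G" and fxy: "f x = y"
            from fG sub have "f \<in> Bnd i K m" by blast
            then obtain C where "f = fi i C" "K \<subseteq> C" unfolding Bnd_def by blast
            then have "f x = True" using True unfolding yh_def fi_def by auto
            then have False using fxy yne True by simp }
          then show ?thesis unfolding R_def by blast
        qed
        then show ?thesis using ne by simp
      next
        case False
        then have yT: "y = True" using yne by simp
        define c where "c = snd (dec x)"
        have key: "\<exists>C. f = fi i C \<and> K \<subseteq> C \<and> finite C \<and> card (C - K) \<le> m \<and> c \<in> C \<and> c \<notin> K"
          if f: "f \<in> R y" for f
        proof -
          from f have fG: "f \<in> G" and fx: "f x" unfolding R_def using yT by auto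
          from fG sub have "f \<in> Bnd i K m" by blast
          then obtain C where C: "f = fi i C" "K \<subseteq> C" "finite C" "card (C - K) \<le> m"
            unfolding Bnd_def by blast
          have ic: "i \<in> set (fst (dec x))" "c \<in> C" using fx C(1) unfolding fi_def c_def by auto
          then have "c \<notin> K" using False unfolding yh_def c_def by auto
          then show ?thesis using C ic by blast
        qed
        have sub2: "R y \<subseteq> Bnd i (insert c K) (m - 1)"
        proof
          fix f assume f: "f \<in> R y"
          obtain C where C: "f = fi i C" "K \<subseteq> C" "finite C" "card (C - K) \<le> m" "c \<in> C" "c \<notin> K"
            using key[OF f] by blast
          have e1: "C - insert c K = (C - K) - {c}" by blast
          have "c \<in> C - K" using C by blast
          then have "card (C - insert c K) = card (C - K) - 1"
            unfolding e1 using C(3) by (simp add: card_Diff_singleton)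
          then show "f \<in> Bnd i (insert c K) (m - 1)"
            unfolding Bnd_def using C by auto
        qed
        have m1: "m \<ge> 1"
        proof -
          obtain f where f: "f \<in> R y" using ne by blast
          obtain C where C: "f = fi i C" "K \<subseteq> C" "finite C" "card (C - K) \<le> m" "c \<in> C" "c \<notin> K"
            using key[OF f] by blast
          then have "card (C - K) > 0" by (subst card_gt_0_iff) auto
          then show ?thesis using C by simp
        qed
        have "R y \<subseteq> Bnd i (insert c K) (m - 1) \<longrightarrow> finite (insert c K) \<longrightarrow> n \<le> m - 1"
          using IHy by blast
        then have "n \<le> m - 1" using sub2 fK by simp
        then show ?thesis using m1 by simp
      qed
    qed
  qed
qed

lemma opt_Fam: "opt_std X (Fam M i) \<le> enat M"
  unfolding opt_std_def
proof (rule Sup_least)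
  fix e assume "e \<in> {enat n |n. forces X (Fam M i) n}"
  then obtain n where n: "e = enat n" "forces X (Fam M i) n" by blast
  have "Fam M i \<subseteq> Bnd i {} M"
    unfolding Fam_def Bnd_def by auto
  then have "n \<le> M" using ub[OF n(2)] by blast
  then show "e \<le> enat M" using n by simp
qed


definition hC :: "nat \<Rightarrow> (nat \<Rightarrow> nat set) \<Rightarrow> nat \<Rightarrow> bool" where
  "hC k E x = (\<exists>i<k. i \<in> set (fst (dec x)) \<and> snd (dec x) \<in> E i)"

definition Hfam :: "nat \<Rightarrow> (nat \<Rightarrow> nat set) \<Rightarrow> (nat \<Rightarrow> nat) \<Rightarrow> nat \<Rightarrow> (nat \<Rightarrow> bool) set" where
  "Hfam k K r N = {hC k (\<lambda>i. K i \<union> D i) | D. \<forall>i<k. finite (D i) \<and> D i \<subseteq> {N..} \<and> card (D i) \<le> r i}"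

definition Phi :: "nat \<Rightarrow> nat \<Rightarrow> nat \<Rightarrow> (nat \<Rightarrow> nat) \<Rightarrow> nat" where
  "Phi j k M r = j * ((\<Sum>i<k. r i) - (k div 2) * M)"

lemma sum_upd_minus:
  fixes r :: "nat \<Rightarrow> nat"
  assumes "i < k" "r i \<ge> 1"
  shows "(\<Sum>l<k. r l) = (\<Sum>l<k. (r(i := r i - 1)) l) + 1"
proof -
  have "(\<Sum>l<k. r l) = (\<Sum>l<k. (r(i := r i - 1)) l + (if l = i then 1 else 0))"
  proof (intro sum.cong refl)
    fix l assume "l \<in> {..<k}"
    have "r i - 1 + 1 = r i" using assms(2) by arith
    then show "r l = (r(i := r i - 1)) l + (if l = i then 1 else 0)" by simp
  qed
  also have "\<dots> = (\<Sum>l<k. (r(i := r i - 1)) l) + (\<Sum>l<k. (if l = i then 1 else 0))"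
    by (simp add: sum.distrib)
  also have "(\<Sum>l<k. (if l = i then 1 else (0::nat))) = 1" using assms by simp
  finally show ?thesis .
qed

lemma sum_le_cardA:
  fixes r :: "nat \<Rightarrow> nat"
  assumes "\<forall>i<k. r i \<le> M"
  shows "(\<Sum>i<k. r i) \<le> card {i. i < k \<and> 1 \<le> r i} * M"
proof -
  have "(\<Sum>i<k. r i) \<le> (\<Sum>i<k. if 1 \<le> r i then M else 0)"
    using assms by (intro sum_mono) auto
  also have "\<dots> = (\<Sum>i\<in>{i\<in>{..<k}. 1 \<le> r i}. M)"
    using sum.inter_filter[OF finite_lessThan[of k], of "\<lambda>i. M" "\<lambda>i. 1 \<le> r i"] by simp
  also have "{i\<in>{..<k}. 1 \<le> r i} = {i. i < k \<and> 1 \<le> r i}" by auto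
  finally show ?thesis by simp
qed

lemma lb:
  assumes kj: "k = 2 ^ j"
  shows "n \<le> Phi j k M r \<Longrightarrow> (\<forall>i<k. K i \<subseteq> {..<N} \<and> r i \<le> M) \<Longrightarrow> forces UNIV (Hfam k K r N) n"
proof (induction n arbitrary: K r N rule: less_induct)
  case (less n)
  show ?case
  proof (cases n)
    case 0
    have "hC k (\<lambda>i. K i \<union> {}) \<in> Hfam k K r N" unfolding Hfam_def by force
    then show ?thesis using 0 forces.zero by blast
  next
    case (Suc n')
    define U where "U = (\<Sum>i<k. r i)"
    have P: "Suc n' \<le> j * (U - (k div 2) * M)" using less.prems Suc unfolding Phi_def U_def by simp
    then have j1: "j \<ge> 1" by (cases j) auto
    have U1: "U - (k div 2) * M \<ge> 1" using P by (cases "U - (k div 2) * M") auto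
    define A where "A = {i. i < k \<and> 1 \<le> r i}"
    have fA: "finite A" unfolding A_def by simp
    have "U \<le> card A * M" unfolding U_def A_def using sum_le_cardA less.prems(2) by blast
    moreover have "(k div 2) * M < U" using U1 by simp
    ultimately have "(k div 2) * M < card A * M" by linarith
    then have "k div 2 < card A" using mult_less_cancel2 by blast
    moreover have "k div 2 = 2 ^ (j - 1)" using kj j1
      by (metis One_nat_def Suc_diff_le diff_Suc_1 nonzero_mult_div_cancel_left power_Suc zero_neq_numeral)
    ultimately have cA: "card A \<ge> 2 ^ (j - 1)" by simp
    obtain as where as: "set as = A" using finite_list[OF fA] by blast
    define x0 where "x0 = to_nat (as, N)"
    have Kl: "\<And>l. l < k \<Longrightarrow> N \<notin> K l" using less.prems(2) by auto
    show ?thesis unfolding Suc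
    proof (rule forces.round, simp, intro allI)
      fix yh
      show "\<exists>y. y \<noteq> yh \<and> forces UNIV {f \<in> Hfam k K r N. f x0 = y} n' \<or>
             y = yh \<and> forces UNIV {f \<in> Hfam k K r N. f x0 = y} (Suc n')"
      proof (cases yh)
        case True
        have IH: "forces UNIV (Hfam k K r (Suc N)) n'"
        proof (rule less.IH)
          show "n' < n" using Suc by simp
          show "n' \<le> Phi j k M r" using Suc less.prems(1) by simp
          show "\<forall>i<k. K i \<subseteq> {..<Suc N} \<and> r i \<le> M" using less.prems(2) by (fastforce simp: subset_iff)
        qed
        have "Hfam k K r (Suc N) \<subseteq> {f \<in> Hfam k K r N. f x0 = False}"
        proof
          fix f assume "f \<in> Hfam k K r (Suc N)"
          then obtain D where D: "f = hC k (\<lambda>i. K i \<union> D i)" "\<forall>i<k. finite (D i) \<and> D i \<subseteq> {Suc N..} \<and> card (D i) \<le> r i"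
            unfolding Hfam_def by blast
          have "f \<in> Hfam k K r N" unfolding Hfam_def using D by force
          moreover have "f x0 = False" unfolding D(1) hC_def x0_def using D(2) Kl by force
          ultimately show "f \<in> {f \<in> Hfam k K r N. f x0 = False}" by blast
        qed
        then show ?thesis using forces_mono[OF IH] True by (intro exI[of _ False]) auto
      next
        case False
        define Hs where "Hs i = Hfam k (K(i := insert N (K i))) (r(i := r i - 1)) (Suc N)" for i
        define m where "m = Suc n' - j"
        have Hi: "forces UNIV (Hs i) m" if iA: "i \<in> A" for i
        proof -
          have ik: "i < k" "r i \<ge> 1" using iA unfolding A_def by auto
          have su: "U = (\<Sum>l<k. (r(i := r i - 1)) l) + 1" unfolding U_def using sum_upd_minus[of i k r, OF ik] .
          have h1: "m \<le> Phi j k M (r(i := r i - 1))"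
          proof -
            have "(\<Sum>l<k. (r(i := r i - 1)) l) - (k div 2) * M = (U - (k div 2) * M) - 1"
              using su by simp
            then have "Phi j k M (r(i := r i - 1)) = j * (U - (k div 2) * M) - j"
              unfolding Phi_def by (simp add: diff_mult_distrib2)
            then show ?thesis unfolding m_def using P by linarith
          qed
          have h2: "m < n" unfolding m_def Suc using j1 by simp
          have h3: "\<forall>l<k. (K(i := insert N (K i))) l \<subseteq> {..<Suc N} \<and> (r(i := r i - 1)) l \<le> M"
          proof (intro allI impI conjI)
            fix l assume lk: "l < k"
            have Kl: "K l \<subseteq> {..<N}" and rl: "r l \<le> M" using less.prems(2) lk by auto
            show "(K(i := insert N (K i))) l \<subseteq> {..<Suc N}" using Kl by (cases "l = i") auto
            show "(r(i := r i - 1)) l \<le> M" using rl by (cases "l = i") auto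
          qed
          show ?thesis unfolding Hs_def by (rule less.IH[OF h2 h1 h3])
        qed
        have pts: "\<forall>S \<subseteq> A. \<exists>x\<in>UNIV. \<forall>i\<in>A. \<forall>f\<in>Hs i. f x = (i \<in> S)"
        proof (intro allI impI)
          fix S assume SA: "S \<subseteq> A"
          then have "finite S" using fA finite_subset by blast
          then obtain ss where ss: "set ss = S" using finite_list by blast
          show "\<exists>x\<in>UNIV. \<forall>i\<in>A. \<forall>f\<in>Hs i. f x = (i \<in> S)"
          proof (rule bexI[of _ "to_nat (ss, N)"], intro ballI)
            fix i f assume iA: "i \<in> A" and f: "f \<in> Hs i"
            then obtain D where D: "f = hC k (\<lambda>l. (K(i := insert N (K i))) l \<union> D l)"
              "\<forall>l<k. finite (D l) \<and> D l \<subseteq> {Suc N..} \<and> card (D l) \<le> (r(i := r i - 1)) l"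
              unfolding Hs_def Hfam_def by blast
            have ik: "i < k" using iA unfolding A_def by auto
            have ND: "N \<notin> D l" if "l < k" for l
            proof -
              have "D l \<subseteq> {Suc N..}" using D(2) that by blast
              then show ?thesis by auto
            qed
            have "(N \<in> (K(i := insert N (K i))) l \<union> D l) = (l = i)" if "l < k" for l
              using ND[OF that] Kl[OF that] by (cases "l = i") auto
            then show "f (to_nat (ss, N)) = (i \<in> S)"
              unfolding D(1) hC_def using ss ik Kl by auto
          qed simp
        qed
        have BS: "forces UNIV (\<Union>i\<in>A. Hs i) (m + (j - 1))"
          using binsearch[OF fA cA _ pts] Hi by blast
        have BS': "forces UNIV (\<Union>i\<in>A. Hs i) n'"
          using forces_down[OF BS] unfolding m_def by simp
        have "(\<Union>i\<in>A. Hs i) \<subseteq> {f \<in> Hfam k K r N. f x0 = True}"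
        proof
          fix f assume "f \<in> (\<Union>i\<in>A. Hs i)"
          then obtain i where iA: "i \<in> A" and f: "f \<in> Hs i" by blast
          have ik: "i < k" "r i \<ge> 1" using iA unfolding A_def by auto
          obtain D where D: "f = hC k (\<lambda>l. (K(i := insert N (K i))) l \<union> D l)"
              "\<forall>l<k. finite (D l) \<and> D l \<subseteq> {Suc N..} \<and> card (D l) \<le> (r(i := r i - 1)) l"
              using f unfolding Hs_def Hfam_def by blast
          define D' where "D' = D(i := insert N (D i))"
          have eq: "(\<lambda>l. (K(i := insert N (K i))) l \<union> D l) = (\<lambda>l. K l \<union> D' l)"
            unfolding D'_def by (auto simp: fun_eq_iff)
          have "\<forall>l<k. finite (D' l) \<and> D' l \<subseteq> {N..} \<and> card (D' l) \<le> r l"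
          proof (intro allI impI)
            fix l assume lk: "l < k"
            show "finite (D' l) \<and> D' l \<subseteq> {N..} \<and> card (D' l) \<le> r l"
            proof (cases "l = i")
              case True
              have "card (insert N (D i)) \<le> Suc (card (D i))" by (simp add: card_insert_le_m1)
              then show ?thesis unfolding D'_def using True D(2) lk ik by force
            next
              case False
              then show ?thesis unfolding D'_def using D(2) lk by force
            qed
          qed
          then have "f \<in> Hfam k K r N" unfolding Hfam_def D(1) eq by blast
          moreover have "f x0 = True" unfolding D(1) hC_def x0_def using as iA ik by auto
          ultimately show "f \<in> {f \<in> Hfam k K r N. f x0 = True}" by blast
        qed
        then show ?thesis using forces_mono[OF BS'] False by (intro exI[of _ True]) auto
      qed
    qed
  qed
qed


theorem mainTheorem14:
  fixes k M :: nat
  assumes "k > 0" and "M > 0" and "\<exists>j. k = 2 ^ j"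
  shows "\<exists>(X :: nat set) (F :: nat \<Rightarrow> (nat \<Rightarrow> bool) set) (g :: bool list \<Rightarrow> bool).
           (\<forall>i<k. opt_std X (F i) \<le> enat M) \<and>
           ereal_of_enat (opt_std X (COMPOSE k F g)) \<ge> ereal (1/2 * real k * real M * log 2 (real k))"
proof -
  obtain j where kj: "k = 2 ^ j" using assms(3) by blast
  define g :: "bool list \<Rightarrow> bool" where "g ys = (True \<in> set ys)" for ys
  define n where "n = Phi j k M (\<lambda>_. M)"
  have F1: "forces UNIV (Hfam k (\<lambda>_. {}) (\<lambda>_. M) 0) n"
    using lb[OF kj, of n M "\<lambda>_. M" "\<lambda>_. {}" 0] unfolding n_def by simp
  have sub: "Hfam k (\<lambda>_. {}) (\<lambda>_. M) 0 \<subseteq> COMPOSE k (Fam M) g"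
  proof
    fix h assume "h \<in> Hfam k (\<lambda>_. {}) (\<lambda>_. M) 0"
    then obtain D where D: "h = hC k (\<lambda>i. {} \<union> D i)" "\<forall>i<k. finite (D i) \<and> card (D i) \<le> M"
      unfolding Hfam_def by blast
    define ff where "ff i = fi i (D i)" for i
    have "h = (\<lambda>x. g (map (\<lambda>i. ff i x) [0..<k]))"
      unfolding D(1) g_def ff_def hC_def fi_def by (auto simp: fun_eq_iff)
    moreover have "\<forall>i<k. ff i \<in> Fam M i" unfolding ff_def Fam_def using D(2) by blast
    ultimately show "h \<in> COMPOSE k (Fam M) g" unfolding COMPOSE_def by blast
  qed
  have F2: "forces UNIV (COMPOSE k (Fam M) g) n" using forces_mono[OF F1 sub] .
  have "enat n \<le> opt_std UNIV (COMPOSE k (Fam M) g)"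
    unfolding opt_std_def using F2 by (intro Sup_upper) blast
  then have L: "ereal (real n) \<le> ereal_of_enat (opt_std UNIV (COMPOSE k (Fam M) g))"
    by (metis ereal_of_enat_le_iff ereal_of_enat_simps(1))
  have R: "1/2 * real k * real M * log 2 (real k) \<le> real n"
  proof (cases j)
    case 0
    then show ?thesis using kj by simp
  next
    case (Suc j')
    have kd: "k div 2 = 2 ^ j'" using kj Suc by simp
    have "(\<Sum>i<k. M) - (k div 2) * M = 2 ^ j' * M" using kj Suc kd by (simp add: diff_mult_distrib)
    then have nn: "n = j * (2 ^ j' * M)" unfolding n_def Phi_def by simp
    have "log 2 (real k) = real j" using kj by (simp add: log_nat_power)
    then show ?thesis unfolding nn using kj Suc by (simp add: field_simps)
  qed
  show ?thesis
  proof (intro exI conjI)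
    show "\<forall>i<k. opt_std UNIV (Fam M i) \<le> enat M" using opt_Fam by blast
    show "ereal (1/2 * real k * real M * log 2 (real k)) \<le> ereal_of_enat (opt_std UNIV (COMPOSE k (Fam M) g))"
      using L R by (meson ereal_less_eq(3) order_trans)
  qed
qed

end
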